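(* Let $F$ be a field containing $\mathcal K$ and let $w_1,\dots,w_N:\mathbb C\to F$ satisfy $L_j(u)w_m(u)=0$ for all $1\le m\le j\le N$ and all $u$, and assume the Casorati determinants $[0,1,\dots,j-1]$ are nonzero for all $1\le j\le N$ and all $u$. Define, for $1\le m\le N$, \[ \tilde x_m(u)=\frac{[0,\dots,m-1]\,[2,\dots,m]}{[1,\dots,m]\,[1,\dots,m-1]} \] (where $[2,\dots,m]$ and $[1,\dots,m-1]$ are $(m-1)\times(m-1)$ determinants, equal to $1$ when $m=1$). Then $\tilde x_m(u)=x_m(u)$ for all $1\le m\le N$ and all $u$.
   Context: Fix an integer $n\ge 2$ and put $N=2n+2$. Let $Q_a(u)$ ($1\le a\le n$, $u\in\mathbb C$) be algebraically independent commuting indeterminates, $\mathcal K$ the field of fractions of $\mathbb Z[Q_a(u)^{\pm1}]$. Put $d_a=1+\delta_{an}$, $Y_a(u)=Q_a(u-\frac{d_a}{2})/Q_a(u+\frac{d_a}{2})$ for $1\le a\le n$, $Y_0(u)=1$. For $1\le a\le n$ set $z_a(u)=\frac{Y_a(u+\frac a2)}{Y_{a-1}(u+\frac{a+1}2)}$, $z_{\bar a}(u)=\frac{Y_{a-1}(u+\frac{2n-a+3}2)}{Y_a(u+\frac{2n-a+4}2)}$; set $x_a(u)=z_a(u)$, $x_{2n+3-a}(u)=z_{\bar a}(u)$ for $1\le a\le n$, and $x_{n+1}(u)=-x_{n+2}(u)=\frac{Q_n(u+\frac n2)Q_n(u+\frac{n+4}2)}{Q_n(u+\frac{n+2}2)^2}$.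 $D$ is the shift operator ($D\,c(u)=c(u+1)D$), acting on $w:\mathbb C\to F$ by $(\sum_jc_jD^j)w(u)=\sum_jc_j(u)w(u+j)$. Let $\epsilon_i=1$ for $i\notin\{n+1,n+2\}$ and $\epsilon_{n+1}=\epsilon_{n+2}=-1$, and for $1\le j\le N$ define $L_j(u)=\prod_{i=N+1-j}^{N}\bigl(D-\epsilon_ix_i(u+n+1-i)\bigr)$, factors ordered by increasing $i$ from left to right. (Then $L_N(u)$ equals $L(u)=\prod_{i=1}^N(x_i(u+n+1-i)-D)$.) Casorati determinants: for integers $i_1,\dots,i_m$, $[i_1,\dots,i_m]$ is the function $u\mapsto\det(w_r(u+i_s))_{1\le r,s\le m}$, using $w_1,\dots,w_m$. *)

theory Defs
  imports Complex_Main "HOL-Library.Poly_Mapping" "Jordan_Normal_Form.Determinant"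
begin

(* Polynomials are finitely supported maps from monomials
   (finitely supported exponent maps) to integer coefficients. *)
definition int_poly_eval :: "('v \<Rightarrow> 'F::field) \<Rightarrow> (('v \<Rightarrow>\<^sub>0 nat) \<Rightarrow>\<^sub>0 int) \<Rightarrow> 'F" where
  "int_poly_eval X p =
     (\<Sum>mo\<in>Poly_Mapping.keys p. of_int (Poly_Mapping.lookup p mo) * (\<Prod>v\<in>Poly_Mapping.keys mo. X v ^ Poly_Mapping.lookup mo v))"

definition int_poly_vars :: "(('v \<Rightarrow>\<^sub>0 nat) \<Rightarrow>\<^sub>0 int) \<Rightarrow> 'v set" where
  "int_poly_vars p = (\<Union>mo\<in>Poly_Mapping.keys p. Poly_Mapping.keys mo)"

definition alg_indep_int :: "'v set \<Rightarrow> ('v \<Rightarrow> 'F::field) \<Rightarrow> bool" where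
  "alg_indep_int V X \<longleftrightarrow>
     (\<forall>p. p \<noteq> 0 \<longrightarrow> int_poly_vars p \<subseteq> V \<longrightarrow> int_poly_eval X p \<noteq> 0)"

definition dd :: "nat \<Rightarrow> nat \<Rightarrow> complex" where
  "dd n a = (if a = n then 2 else 1)"

definition YY :: "nat \<Rightarrow> (nat \<Rightarrow> complex \<Rightarrow> 'F::field) \<Rightarrow> nat \<Rightarrow> complex \<Rightarrow> 'F" where
  "YY n Q a u = (if a = 0 then 1 else Q a (u - dd n a / 2) / Q a (u + dd n a / 2))"

definition zz :: "nat \<Rightarrow> (nat \<Rightarrow> complex \<Rightarrow> 'F::field) \<Rightarrow> nat \<Rightarrow> complex \<Rightarrow> 'F" where
  "zz n Q a u = YY n Q a (u + of_nat a / 2) / YY n Q (a - 1) (u + (of_nat a + 1) / 2)"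

definition zbar :: "nat \<Rightarrow> (nat \<Rightarrow> complex \<Rightarrow> 'F::field) \<Rightarrow> nat \<Rightarrow> complex \<Rightarrow> 'F" where
  "zbar n Q a u = YY n Q (a - 1) (u + (2 * of_nat n - of_nat a + 3) / 2)
                  / YY n Q a (u + (2 * of_nat n - of_nat a + 4) / 2)"

definition xx :: "nat \<Rightarrow> (nat \<Rightarrow> complex \<Rightarrow> 'F::field) \<Rightarrow> nat \<Rightarrow> complex \<Rightarrow> 'F" where
  "xx n Q i u =
    (if 1 \<le> i \<and> i \<le> n then zz n Q i u
     else if i = n + 1 then
       Q n (u + of_nat n / 2) * Q n (u + (of_nat n + 4) / 2) / Q n (u + (of_nat n + 2) / 2) ^ 2
     else if i = n + 2 then
       - (Q n (u + of_nat n / 2) * Q n (u + (of_nat n + 4) / 2) / Q n (u + (of_nat n + 2) / 2) ^ 2)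
     else if n + 3 \<le> i \<and> i \<le> 2 * n + 2 then zbar n Q (2 * n + 3 - i) u
     else 0)"

definition eps :: "nat \<Rightarrow> nat \<Rightarrow> 'F::field" where
  "eps n i = (if i = n + 1 \<or> i = n + 2 then -1 else 1)"

definition Lfactor :: "nat \<Rightarrow> (nat \<Rightarrow> complex \<Rightarrow> 'F::field) \<Rightarrow> nat \<Rightarrow> (complex \<Rightarrow> 'F) \<Rightarrow> complex \<Rightarrow> 'F" where
  "Lfactor n Q i g u = g (u + 1) - eps n i * xx n Q i (u + of_nat (n + 1) - of_nat i) * g u"

(* action of L_j(u) = prod_{i=N+1-j}^{N} (D - eps_i x_i(u+n+1-i)) (increasing i left to right),
   N = 2n+2: the rightmost factor acts first *)
definition Lop :: "nat \<Rightarrow> (nat \<Rightarrow> complex \<Rightarrow> 'F::field) \<Rightarrow> nat \<Rightarrow> (complex \<Rightarrow> 'F) \<Rightarrow> complex \<Rightarrow> 'F" where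
  "Lop n Q j w = foldr (Lfactor n Q) [2 * n + 3 - j ..< 2 * n + 3] w"

(* Casorati determinant [i_1,...,i_m](u) = det (w_r(u+i_s))_{1\<le>r,s\<le>m} using w_1..w_m *)
definition casorati :: "(nat \<Rightarrow> complex \<Rightarrow> 'F::field) \<Rightarrow> int list \<Rightarrow> complex \<Rightarrow> 'F" where
  "casorati w idx u = det (mat (length idx) (length idx)
       (\<lambda>(r, s). w (Suc r) (u + of_int (idx ! s))))"

definition xtilde :: "(nat \<Rightarrow> complex \<Rightarrow> 'F::field) \<Rightarrow> nat \<Rightarrow> complex \<Rightarrow> 'F" where
  "xtilde w m u =
     casorati w (map int [0..<m]) u * casorati w (map int [2..<m+1]) u
     / (casorati w (map int [1..<m+1]) u * casorati w (map int [1..<m]) u)"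

end

theory Submission
  imports Defs
begin


definition Pc :: "nat \<Rightarrow> (nat \<Rightarrow> complex \<Rightarrow> 'F::field) \<Rightarrow> nat \<Rightarrow> complex \<Rightarrow> 'F" where
  "Pc n Q m u = (if m = 0 then 1
     else if m < n then Q m (u + (of_nat m + 1)/2) / Q m (u + (of_nat m - 1)/2)
     else if m = n then Q n (u + (of_nat n + 2)/2) / Q n (u + (of_nat n - 2)/2)
     else if m = n+1 then (Q n (u + (of_nat n + 2)/2) / Q n (u + of_nat n/2))^2
     else if m = n+2 then - (Q n (u + (of_nat n + 4)/2) / Q n (u + of_nat n/2))
     else if m < 2*n+2 then - (Q (2*n+2-m) (u + (of_nat m + 1)/2) / Q (2*n+2-m) (u + (of_nat m - 1)/2))
     else -1)"

definition Af :: "nat \<Rightarrow> (nat \<Rightarrow> complex \<Rightarrow> 'F::field) \<Rightarrow> nat \<Rightarrow> complex \<Rightarrow> 'F" where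
  "Af n Q i u = eps n i * xx n Q i (u + of_nat (n+1) - of_nat i)"

lemma th: "(2::complex) * (x/2) = x" by simp

lemmas argsimps = algebra_simps th add_divide_distrib diff_divide_distrib

lemma xx_zz: "1 \<le> i \<Longrightarrow> i \<le> n \<Longrightarrow> xx n Q i u = zz n Q i u" by (simp add: xx_def)
lemma xx_n1: "xx n Q (n+1) u = Q n (u + of_nat n / 2) * Q n (u + (of_nat n + 4) / 2) / Q n (u + (of_nat n + 2) / 2) ^ 2"
  by (simp add: xx_def)
lemma xx_n2: "xx n Q (n+2) u = - (Q n (u + of_nat n / 2) * Q n (u + (of_nat n + 4) / 2) / Q n (u + (of_nat n + 2) / 2) ^ 2)"
  by (simp add: xx_def)
lemma xx_zbar: "n + 3 \<le> i \<Longrightarrow> i \<le> 2*n+2 \<Longrightarrow> xx n Q i u = zbar n Q (2*n+3-i) u" by (simp add: xx_def)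
lemma eps1: "i \<noteq> n+1 \<Longrightarrow> i \<noteq> n+2 \<Longrightarrow> eps n i = 1" by (simp add: eps_def)
lemma eps2: "i = n+1 \<or> i = n+2 \<Longrightarrow> eps n i = -1" by (auto simp add: eps_def)


lemma Pc_0: "Pc n Q 0 u = 1" by (simp add: Pc_def)
lemma Pc_lo: "1 \<le> m \<Longrightarrow> m < n \<Longrightarrow> Pc n Q m u = Q m (u + (of_nat m + 1)/2) / Q m (u + (of_nat m - 1)/2)"
  by (simp add: Pc_def)
lemma Pc_n: "1 \<le> n \<Longrightarrow> Pc n Q n u = Q n (u + (of_nat n + 2)/2) / Q n (u + (of_nat n - 2)/2)"
  by (simp add: Pc_def)
lemma Pc_n1: "1 \<le> n \<Longrightarrow> Pc n Q (n+1) u = (Q n (u + (of_nat n + 2)/2) / Q n (u + of_nat n/2))^2"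
  by (simp add: Pc_def)
lemma Pc_n2: "1 \<le> n \<Longrightarrow> Pc n Q (n+2) u = - (Q n (u + (of_nat n + 4)/2) / Q n (u + of_nat n/2))"
  by (simp add: Pc_def)
lemma Pc_hi: "n + 3 \<le> m \<Longrightarrow> m < 2*n+2 \<Longrightarrow> Pc n Q m u = - (Q (2*n+2-m) (u + (of_nat m + 1)/2) / Q (2*n+2-m) (u + (of_nat m - 1)/2))"
  by (simp add: Pc_def)
lemma Pc_top: "1 \<le> n \<Longrightarrow> Pc n Q (2*n+2) u = -1"
  by (simp add: Pc_def)
lemma xx_n1': "xx n Q (Suc n) u = Q n (u + of_nat n / 2) * Q n (u + (of_nat n + 4) / 2) / Q n (u + (of_nat n + 2) / 2) ^ 2"
  by (simp add: xx_def)
lemma xx_n2': "xx n Q (Suc (Suc n)) u = - (Q n (u + of_nat n / 2) * Q n (u + (of_nat n + 4) / 2) / Q n (u + (of_nat n + 2) / 2) ^ 2)"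
  by (simp add: xx_def)

lemma S1:
  fixes Q :: "nat \<Rightarrow> complex \<Rightarrow> 'F::field"
  assumes nz: "\<And>a v. 1 \<le> a \<Longrightarrow> a \<le> n \<Longrightarrow> Q a v \<noteq> 0"
    and m: "2 \<le> n"
  shows "Pc n Q 1 u = Af n Q (2*n+2) u * Pc n Q 0 u"
proof -
  define R where "R a k = Q a (k/2)" for a k
  have Qe: "Q a v = R a (2*v)" for a v by (simp add: R_def)
  have Rnz0: "1 \<le> a \<Longrightarrow> a \<le> n \<Longrightarrow> R a k \<noteq> 0" for a k using nz by (simp add: R_def)
  have Rnz: "R 1 k \<noteq> 0" for k using nz m by (auto simp add: R_def)
  have ne: "n - Suc 0 \<noteq> n" "n \<noteq> 0" using m by auto
  have P0: "Pc n Q 1 u = Q 1 (u + 1) / Q 1 u"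
    using m by (subst Pc_lo) auto
  have P1: "Pc n Q 0 u = 1"
    using m by (simp add: Pc_0)
  have P2: "Af n Q (2*n+2) u = zbar n Q 1 (u + of_nat (n+1) - of_nat (2*n+2))"
    using m by (simp add: Af_def eps1 xx_zbar)
  show ?thesis using m
    by ((simp only: P0 P1 P2)?, (simp add: zz_def zbar_def YY_def dd_def xx_n1' xx_n2' ne )?,
      (simp only: Qe)?, (simp add: argsimps)?, (simp add: field_simps Rnz Rnz0 power2_eq_square)?)
qed

lemma S2:
  fixes Q :: "nat \<Rightarrow> complex \<Rightarrow> 'F::field"
  assumes nz: "\<And>a v. 1 \<le> a \<Longrightarrow> a \<le> n \<Longrightarrow> Q a v \<noteq> 0"
    and m: "1 \<le> m" "m + 1 < n"
  shows "Pc n Q (m+1) u = Af n Q (2*n+2-m) u * Pc n Q m u"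
proof -
  define R where "R a k = Q a (k/2)" for a k
  have Qe: "Q a v = R a (2*v)" for a v by (simp add: R_def)
  have Rnz0: "1 \<le> a \<Longrightarrow> a \<le> n \<Longrightarrow> R a k \<noteq> 0" for a k using nz by (simp add: R_def)
  have Rnz: "R m k \<noteq> 0" "R (Suc m) k \<noteq> 0" for k using nz m by (auto simp add: R_def)
  have ne: "n - Suc 0 \<noteq> n" "n \<noteq> 0" using m by auto
  have P0: "Pc n Q (m+1) u = Q (m+1) (u + (of_nat m + 2)/2) / Q (m+1) (u + (of_nat m)/2)"
    using m by (subst Pc_lo) (auto simp: algebra_simps)
  have P1: "Pc n Q m u = Q m (u + (of_nat m + 1)/2) / Q m (u + (of_nat m - 1)/2)"
    using m by (subst Pc_lo) auto
  have P2: "Af n Q (2*n+2-m) u = zbar n Q (m+1) (u + of_nat m - of_nat n - 1)"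
    using m by (subst Af_def, subst eps1, simp, simp, subst xx_zbar) (auto simp: of_nat_diff algebra_simps)
  show ?thesis using m
    by ((simp only: P0 P1 P2)?, (simp add: zz_def zbar_def YY_def dd_def xx_n1' xx_n2' ne )?,
      (simp only: Qe)?, (simp add: argsimps)?, (simp add: field_simps Rnz Rnz0 power2_eq_square)?)
qed

lemma S3:
  fixes Q :: "nat \<Rightarrow> complex \<Rightarrow> 'F::field"
  assumes nz: "\<And>a v. 1 \<le> a \<Longrightarrow> a \<le> n \<Longrightarrow> Q a v \<noteq> 0"
    and m: "2 \<le> n"
  shows "Pc n Q n u = Af n Q (n+3) u * Pc n Q (n-1) u"
proof -
  define R where "R a k = Q a (k/2)" for a k
  have Qe: "Q a v = R a (2*v)" for a v by (simp add: R_def)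
  have Rnz0: "1 \<le> a \<Longrightarrow> a \<le> n \<Longrightarrow> R a k \<noteq> 0" for a k using nz by (simp add: R_def)
  have Rnz: "R n k \<noteq> 0" "R (n - Suc 0) k \<noteq> 0" for k using nz m by (auto simp add: R_def)
  have ne: "n - Suc 0 \<noteq> n" "n \<noteq> 0" using m by auto
  have P0: "Pc n Q n u = Q n (u + (of_nat n + 2)/2) / Q n (u + (of_nat n - 2)/2)"
    using m by (subst Pc_n) auto
  have P1: "Pc n Q (n-1) u = Q (n-1) (u + (of_nat n)/2) / Q (n-1) (u + (of_nat n - 2)/2)"
    using m by (subst Pc_lo) (auto simp: of_nat_diff algebra_simps)
  have P2: "Af n Q (n+3) u = zbar n Q n (u - 2)"
    using m by (subst Af_def, subst eps1, simp, simp, subst xx_zbar) (auto simp: of_nat_diff)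
  show ?thesis using m
    by ((simp only: P0 P1 P2)?, (simp add: zz_def zbar_def YY_def dd_def xx_n1' xx_n2' ne )?,
      (simp only: Qe)?, (simp add: argsimps)?, (simp add: field_simps Rnz Rnz0 power2_eq_square)?)
qed

lemma S4:
  fixes Q :: "nat \<Rightarrow> complex \<Rightarrow> 'F::field"
  assumes nz: "\<And>a v. 1 \<le> a \<Longrightarrow> a \<le> n \<Longrightarrow> Q a v \<noteq> 0"
    and m: "2 \<le> n"
  shows "Pc n Q (n+1) u = Af n Q (n+2) u * Pc n Q n u"
proof -
  define R where "R a k = Q a (k/2)" for a k
  have Qe: "Q a v = R a (2*v)" for a v by (simp add: R_def)
  have Rnz0: "1 \<le> a \<Longrightarrow> a \<le> n \<Longrightarrow> R a k \<noteq> 0" for a k using nz by (simp add: R_def)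
  have Rnz: "R n k \<noteq> 0" for k using nz m by (auto simp add: R_def)
  have ne: "n - Suc 0 \<noteq> n" "n \<noteq> 0" using m by auto
  have P0: "Pc n Q (n+1) u = (Q n (u + (of_nat n + 2)/2) / Q n (u + of_nat n/2))^2"
    using m by (subst Pc_n1) auto
  have P1: "Pc n Q n u = Q n (u + (of_nat n + 2)/2) / Q n (u + (of_nat n - 2)/2)"
    using m by (subst Pc_n) auto
  have P2: "Af n Q (n+2) u = - xx n Q (n+2) (u - 1)"
    using m by (simp add: Af_def eps2)
  show ?thesis using m
    by ((simp only: P0 P1 P2)?, (simp add: zz_def zbar_def YY_def dd_def xx_n1' xx_n2' ne )?,
      (simp only: Qe)?, (simp add: argsimps)?, (simp add: field_simps Rnz Rnz0 power2_eq_square)?)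
qed

lemma S5:
  fixes Q :: "nat \<Rightarrow> complex \<Rightarrow> 'F::field"
  assumes nz: "\<And>a v. 1 \<le> a \<Longrightarrow> a \<le> n \<Longrightarrow> Q a v \<noteq> 0"
    and m: "2 \<le> n"
  shows "Pc n Q (n+2) u = Af n Q (n+1) u * Pc n Q (n+1) u"
proof -
  define R where "R a k = Q a (k/2)" for a k
  have Qe: "Q a v = R a (2*v)" for a v by (simp add: R_def)
  have Rnz0: "1 \<le> a \<Longrightarrow> a \<le> n \<Longrightarrow> R a k \<noteq> 0" for a k using nz by (simp add: R_def)
  have Rnz: "R n k \<noteq> 0" for k using nz m by (auto simp add: R_def)
  have ne: "n - Suc 0 \<noteq> n" "n \<noteq> 0" using m by auto
  have P0: "Pc n Q (n+2) u = - (Q n (u + (of_nat n + 4)/2) / Q n (u + of_nat n/2))"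
    using m by (subst Pc_n2) auto
  have P1: "Pc n Q (n+1) u = (Q n (u + (of_nat n + 2)/2) / Q n (u + of_nat n/2))^2"
    using m by (subst Pc_n1) auto
  have P2: "Af n Q (n+1) u = - xx n Q (n+1) u"
    using m by (simp add: Af_def eps2)
  show ?thesis using m
    by ((simp only: P0 P1 P2)?, (simp add: zz_def zbar_def YY_def dd_def xx_n1' xx_n2' ne )?,
      (simp only: Qe)?, (simp add: argsimps)?, (simp add: field_simps Rnz Rnz0 power2_eq_square)?)
qed

lemma S6:
  fixes Q :: "nat \<Rightarrow> complex \<Rightarrow> 'F::field"
  assumes nz: "\<And>a v. 1 \<le> a \<Longrightarrow> a \<le> n \<Longrightarrow> Q a v \<noteq> 0"
    and m: "2 \<le> n"
  shows "Pc n Q (n+3) u = Af n Q n u * Pc n Q (n+2) u"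
proof -
  define R where "R a k = Q a (k/2)" for a k
  have Qe: "Q a v = R a (2*v)" for a v by (simp add: R_def)
  have Rnz0: "1 \<le> a \<Longrightarrow> a \<le> n \<Longrightarrow> R a k \<noteq> 0" for a k using nz by (simp add: R_def)
  have Rnz: "R n k \<noteq> 0" "R (n - Suc 0) k \<noteq> 0" for k using nz m by (auto simp add: R_def)
  have ne: "n - Suc 0 \<noteq> n" "n \<noteq> 0" using m by auto
  have P0: "Pc n Q (n+3) u = - (Q (n-1) (u + (of_nat n + 4)/2) / Q (n-1) (u + (of_nat n + 2)/2))"
    using m by (subst Pc_hi) (auto simp: algebra_simps)
  have P1: "Pc n Q (n+2) u = - (Q n (u + (of_nat n + 4)/2) / Q n (u + of_nat n/2))"
    using m by (subst Pc_n2) auto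
  have P2: "Af n Q n u = zz n Q n (u + 1)"
    using m by (subst Af_def, subst eps1, simp, simp, subst xx_zz) auto
  show ?thesis using m
    by ((simp only: P0 P1 P2)?, (simp add: zz_def zbar_def YY_def dd_def xx_n1' xx_n2' ne )?,
      (simp only: Qe)?, (simp add: argsimps)?, (simp add: field_simps Rnz Rnz0 power2_eq_square)?)
qed

lemma S7a:
  fixes Q :: "nat \<Rightarrow> complex \<Rightarrow> 'F::field"
  assumes nz: "\<And>a v. 1 \<le> a \<Longrightarrow> a \<le> n \<Longrightarrow> Q a v \<noteq> 0"
    and m: "1 \<le> a" "a + 2 \<le> n"
  shows "Pc n Q (2*n+2-a) u = Af n Q (a+1) u * Pc n Q (2*n+1-a) u"
proof -
  define R where "R a k = Q a (k/2)" for a k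
  have Qe: "Q a v = R a (2*v)" for a v by (simp add: R_def)
  have Rnz0: "1 \<le> a \<Longrightarrow> a \<le> n \<Longrightarrow> R a k \<noteq> 0" for a k using nz by (simp add: R_def)
  have Rnz: "R a k \<noteq> 0" "R (Suc a) k \<noteq> 0" for k using nz m by (auto simp add: R_def)
  have ne: "n - Suc 0 \<noteq> n" "n \<noteq> 0" using m by auto
  have P0: "Pc n Q (2*n+2-a) u = - (Q a (u + (2*of_nat n + 3 - of_nat a)/2) / Q a (u + (2*of_nat n + 1 - of_nat a)/2))"
    using m by (subst Pc_hi) (auto simp: of_nat_diff algebra_simps)
  have P1: "Pc n Q (2*n+1-a) u = - (Q (a+1) (u + (2*of_nat n + 2 - of_nat a)/2) / Q (a+1) (u + (2*of_nat n - of_nat a)/2))"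
    using m by (subst Pc_hi) (auto simp: of_nat_diff algebra_simps)
  have P2: "Af n Q (a+1) u = zz n Q (a+1) (u + of_nat n - of_nat a)"
    using m by (subst Af_def, subst eps1, simp, simp, subst xx_zz) (auto simp: algebra_simps)
  show ?thesis using m
    by ((simp only: P0 P1 P2)?, (simp add: zz_def zbar_def YY_def dd_def xx_n1' xx_n2' ne )?,
      (simp only: Qe)?, (simp add: argsimps)?, (simp add: field_simps Rnz Rnz0 power2_eq_square)?)
qed

lemma S7b:
  fixes Q :: "nat \<Rightarrow> complex \<Rightarrow> 'F::field"
  assumes nz: "\<And>a v. 1 \<le> a \<Longrightarrow> a \<le> n \<Longrightarrow> Q a v \<noteq> 0"
    and m: "2 \<le> n"
  shows "Pc n Q (2*n+2) u = Af n Q 1 u * Pc n Q (2*n+1) u"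
proof -
  define R where "R a k = Q a (k/2)" for a k
  have Qe: "Q a v = R a (2*v)" for a v by (simp add: R_def)
  have Rnz0: "1 \<le> a \<Longrightarrow> a \<le> n \<Longrightarrow> R a k \<noteq> 0" for a k using nz by (simp add: R_def)
  have Rnz: "R 1 k \<noteq> 0" for k using nz m by (auto simp add: R_def)
  have ne: "n - Suc 0 \<noteq> n" "n \<noteq> 0" using m by auto
  have P0: "Pc n Q (2*n+2) u = -1"
    using m by (subst Pc_top) auto
  have P1: "Pc n Q (2*n+1) u = - (Q 1 (u + (2*of_nat n + 2)/2) / Q 1 (u + (2*of_nat n)/2))"
    using m by (subst Pc_hi) (auto simp: algebra_simps)
  have P2: "Af n Q 1 u = zz n Q 1 (u + of_nat n)"
    using m by (subst Af_def, subst eps1, simp, simp, subst xx_zz) (auto simp: algebra_simps)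
  show ?thesis using m
    by ((simp only: P0 P1 P2)?, (simp add: zz_def zbar_def YY_def dd_def xx_n1' xx_n2' ne )?,
      (simp only: Qe)?, (simp add: argsimps)?, (simp add: field_simps Rnz Rnz0 power2_eq_square)?)
qed

lemma F1:
  fixes Q :: "nat \<Rightarrow> complex \<Rightarrow> 'F::field"
  assumes nz: "\<And>a v. 1 \<le> a \<Longrightarrow> a \<le> n \<Longrightarrow> Q a v \<noteq> 0"
    and m: "2 \<le> n"
  shows "Pc n Q 0 (u+1) = xx n Q 1 u * Pc n Q 1 u"
proof -
  define R where "R a k = Q a (k/2)" for a k
  have Qe: "Q a v = R a (2*v)" for a v by (simp add: R_def)
  have Rnz0: "1 \<le> a \<Longrightarrow> a \<le> n \<Longrightarrow> R a k \<noteq> 0" for a k using nz by (simp add: R_def)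
  have Rnz: "R 1 k \<noteq> 0" for k using nz m by (auto simp add: R_def)
  have ne: "n - Suc 0 \<noteq> n" "n \<noteq> 0" using m by auto
  have P0: "Pc n Q 0 (u+1) = 1"
    using m by (simp add: Pc_0)
  have P1: "Pc n Q 1 u = Q 1 (u + 1) / Q 1 u"
    using m by (subst Pc_lo) auto
  have P2: "xx n Q 1 u = zz n Q 1 u"
    using m by (subst xx_zz) auto
  show ?thesis using m
    by ((simp only: P0 P1 P2)?, (simp add: zz_def zbar_def YY_def dd_def xx_n1' xx_n2' ne )?,
      (simp only: Qe)?, (simp add: argsimps)?, (simp add: field_simps Rnz Rnz0 power2_eq_square)?)
qed

lemma F2:
  fixes Q :: "nat \<Rightarrow> complex \<Rightarrow> 'F::field"
  assumes nz: "\<And>a v. 1 \<le> a \<Longrightarrow> a \<le> n \<Longrightarrow> Q a v \<noteq> 0"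
    and m: "1 \<le> b" "b + 2 \<le> n"
  shows "Pc n Q b (u+1) = xx n Q (b+1) u * Pc n Q (b+1) u"
proof -
  define R where "R a k = Q a (k/2)" for a k
  have Qe: "Q a v = R a (2*v)" for a v by (simp add: R_def)
  have Rnz0: "1 \<le> a \<Longrightarrow> a \<le> n \<Longrightarrow> R a k \<noteq> 0" for a k using nz by (simp add: R_def)
  have Rnz: "R b k \<noteq> 0" "R (Suc b) k \<noteq> 0" for k using nz m by (auto simp add: R_def)
  have ne: "n - Suc 0 \<noteq> n" "n \<noteq> 0" using m by auto
  have P0: "Pc n Q b (u+1) = Q b (u + 1 + (of_nat b + 1)/2) / Q b (u + 1 + (of_nat b - 1)/2)"
    using m by (subst Pc_lo) auto
  have P1: "Pc n Q (b+1) u = Q (b+1) (u + (of_nat b + 2)/2) / Q (b+1) (u + (of_nat b)/2)"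
    using m by (subst Pc_lo) (auto simp: algebra_simps)
  have P2: "xx n Q (b+1) u = zz n Q (b+1) u"
    using m by (subst xx_zz) auto
  show ?thesis using m
    by ((simp only: P0 P1 P2)?, (simp add: zz_def zbar_def YY_def dd_def xx_n1' xx_n2' ne )?,
      (simp only: Qe)?, (simp add: argsimps)?, (simp add: field_simps Rnz Rnz0 power2_eq_square)?)
qed

lemma F3:
  fixes Q :: "nat \<Rightarrow> complex \<Rightarrow> 'F::field"
  assumes nz: "\<And>a v. 1 \<le> a \<Longrightarrow> a \<le> n \<Longrightarrow> Q a v \<noteq> 0"
    and m: "2 \<le> n"
  shows "Pc n Q (n-1) (u+1) = xx n Q n u * Pc n Q n u"
proof -
  define R where "R a k = Q a (k/2)" for a k
  have Qe: "Q a v = R a (2*v)" for a v by (simp add: R_def)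
  have Rnz0: "1 \<le> a \<Longrightarrow> a \<le> n \<Longrightarrow> R a k \<noteq> 0" for a k using nz by (simp add: R_def)
  have Rnz: "R n k \<noteq> 0" "R (n - Suc 0) k \<noteq> 0" for k using nz m by (auto simp add: R_def)
  have ne: "n - Suc 0 \<noteq> n" "n \<noteq> 0" using m by auto
  have P0: "Pc n Q (n-1) (u+1) = Q (n-1) (u + 1 + (of_nat n)/2) / Q (n-1) (u + 1 + (of_nat n - 2)/2)"
    using m by (subst Pc_lo) (auto simp: of_nat_diff algebra_simps)
  have P1: "Pc n Q n u = Q n (u + (of_nat n + 2)/2) / Q n (u + (of_nat n - 2)/2)"
    using m by (subst Pc_n) auto
  have P2: "xx n Q n u = zz n Q n u"
    using m by (subst xx_zz) auto
  show ?thesis using m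
    by ((simp only: P0 P1 P2)?, (simp add: zz_def zbar_def YY_def dd_def xx_n1' xx_n2' ne )?,
      (simp only: Qe)?, (simp add: argsimps)?, (simp add: field_simps Rnz Rnz0 power2_eq_square)?)
qed

lemma F4:
  fixes Q :: "nat \<Rightarrow> complex \<Rightarrow> 'F::field"
  assumes nz: "\<And>a v. 1 \<le> a \<Longrightarrow> a \<le> n \<Longrightarrow> Q a v \<noteq> 0"
    and m: "2 \<le> n"
  shows "Pc n Q n (u+1) = xx n Q (n+1) u * Pc n Q (n+1) u"
proof -
  define R where "R a k = Q a (k/2)" for a k
  have Qe: "Q a v = R a (2*v)" for a v by (simp add: R_def)
  have Rnz0: "1 \<le> a \<Longrightarrow> a \<le> n \<Longrightarrow> R a k \<noteq> 0" for a k using nz by (simp add: R_def)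
  have Rnz: "R n k \<noteq> 0" for k using nz m by (auto simp add: R_def)
  have ne: "n - Suc 0 \<noteq> n" "n \<noteq> 0" using m by auto
  have P0: "Pc n Q n (u+1) = Q n (u + 1 + (of_nat n + 2)/2) / Q n (u + 1 + (of_nat n - 2)/2)"
    using m by (subst Pc_n) auto
  have P1: "Pc n Q (n+1) u = (Q n (u + (of_nat n + 2)/2) / Q n (u + of_nat n/2))^2"
    using m by (subst Pc_n1) auto
  show ?thesis using m
    by ((simp only: P0 P1)?, (simp add: zz_def zbar_def YY_def dd_def xx_n1' xx_n2' ne )?,
      (simp only: Qe)?, (simp add: argsimps)?, (simp add: field_simps Rnz Rnz0 power2_eq_square)?)
qed

lemma F5:
  fixes Q :: "nat \<Rightarrow> complex \<Rightarrow> 'F::field"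
  assumes nz: "\<And>a v. 1 \<le> a \<Longrightarrow> a \<le> n \<Longrightarrow> Q a v \<noteq> 0"
    and m: "2 \<le> n"
  shows "Pc n Q (n+1) (u+1) = xx n Q (n+2) u * Pc n Q (n+2) u"
proof -
  define R where "R a k = Q a (k/2)" for a k
  have Qe: "Q a v = R a (2*v)" for a v by (simp add: R_def)
  have Rnz0: "1 \<le> a \<Longrightarrow> a \<le> n \<Longrightarrow> R a k \<noteq> 0" for a k using nz by (simp add: R_def)
  have Rnz: "R n k \<noteq> 0" for k using nz m by (auto simp add: R_def)
  have ne: "n - Suc 0 \<noteq> n" "n \<noteq> 0" using m by auto
  have P0: "Pc n Q (n+1) (u+1) = (Q n (u + 1 + (of_nat n + 2)/2) / Q n (u + 1 + of_nat n/2))^2"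
    using m by (subst Pc_n1) auto
  have P1: "Pc n Q (n+2) u = - (Q n (u + (of_nat n + 4)/2) / Q n (u + of_nat n/2))"
    using m by (subst Pc_n2) auto
  show ?thesis using m
    by ((simp only: P0 P1)?, (simp add: zz_def zbar_def YY_def dd_def xx_n1' xx_n2' ne )?,
      (simp only: Qe)?, (simp add: argsimps)?, (simp add: field_simps Rnz Rnz0 power2_eq_square)?)
qed

lemma F6:
  fixes Q :: "nat \<Rightarrow> complex \<Rightarrow> 'F::field"
  assumes nz: "\<And>a v. 1 \<le> a \<Longrightarrow> a \<le> n \<Longrightarrow> Q a v \<noteq> 0"
    and m: "2 \<le> n"
  shows "Pc n Q (n+2) (u+1) = xx n Q (n+3) u * Pc n Q (n+3) u"
proof -
  define R where "R a k = Q a (k/2)" for a k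
  have Qe: "Q a v = R a (2*v)" for a v by (simp add: R_def)
  have Rnz0: "1 \<le> a \<Longrightarrow> a \<le> n \<Longrightarrow> R a k \<noteq> 0" for a k using nz by (simp add: R_def)
  have Rnz: "R n k \<noteq> 0" "R (n - Suc 0) k \<noteq> 0" for k using nz m by (auto simp add: R_def)
  have ne: "n - Suc 0 \<noteq> n" "n \<noteq> 0" using m by auto
  have P0: "Pc n Q (n+2) (u+1) = - (Q n (u + 1 + (of_nat n + 4)/2) / Q n (u + 1 + of_nat n/2))"
    using m by (subst Pc_n2) auto
  have P1: "Pc n Q (n+3) u = - (Q (n-1) (u + (of_nat n + 4)/2) / Q (n-1) (u + (of_nat n + 2)/2))"
    using m by (subst Pc_hi) (auto simp: algebra_simps)
  have P2: "xx n Q (n+3) u = zbar n Q n u"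
    using m by (subst xx_zbar) auto
  show ?thesis using m
    by ((simp only: P0 P1 P2)?, (simp add: zz_def zbar_def YY_def dd_def xx_n1' xx_n2' ne )?,
      (simp only: Qe)?, (simp add: argsimps)?, (simp add: field_simps Rnz Rnz0 power2_eq_square)?)
qed

lemma F7:
  fixes Q :: "nat \<Rightarrow> complex \<Rightarrow> 'F::field"
  assumes nz: "\<And>a v. 1 \<le> a \<Longrightarrow> a \<le> n \<Longrightarrow> Q a v \<noteq> 0"
    and m: "1 \<le> b" "b + 2 \<le> n"
  shows "Pc n Q (2*n+1-b) (u+1) = xx n Q (2*n+2-b) u * Pc n Q (2*n+2-b) u"
proof -
  define R where "R a k = Q a (k/2)" for a k
  have Qe: "Q a v = R a (2*v)" for a v by (simp add: R_def)
  have Rnz0: "1 \<le> a \<Longrightarrow> a \<le> n \<Longrightarrow> R a k \<noteq> 0" for a k using nz by (simp add: R_def)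
  have Rnz: "R b k \<noteq> 0" "R (Suc b) k \<noteq> 0" for k using nz m by (auto simp add: R_def)
  have ne: "n - Suc 0 \<noteq> n" "n \<noteq> 0" using m by auto
  have P0: "Pc n Q (2*n+1-b) (u+1) = - (Q (b+1) (u + 1 + (2*of_nat n + 2 - of_nat b)/2) / Q (b+1) (u + 1 + (2*of_nat n - of_nat b)/2))"
    using m by (subst Pc_hi) (auto simp: of_nat_diff algebra_simps)
  have P1: "Pc n Q (2*n+2-b) u = - (Q b (u + (2*of_nat n + 3 - of_nat b)/2) / Q b (u + (2*of_nat n + 1 - of_nat b)/2))"
    using m by (subst Pc_hi) (auto simp: of_nat_diff algebra_simps)
  have P2: "xx n Q (2*n+2-b) u = zbar n Q (b+1) u"
    using m by (subst xx_zbar) (auto)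
  show ?thesis using m
    by ((simp only: P0 P1 P2)?, (simp add: zz_def zbar_def YY_def dd_def xx_n1' xx_n2' ne )?,
      (simp only: Qe)?, (simp add: argsimps)?, (simp add: field_simps Rnz Rnz0 power2_eq_square)?)
qed

lemma F8:
  fixes Q :: "nat \<Rightarrow> complex \<Rightarrow> 'F::field"
  assumes nz: "\<And>a v. 1 \<le> a \<Longrightarrow> a \<le> n \<Longrightarrow> Q a v \<noteq> 0"
    and m: "2 \<le> n"
  shows "Pc n Q (2*n+1) (u+1) = xx n Q (2*n+2) u * Pc n Q (2*n+2) u"
proof -
  define R where "R a k = Q a (k/2)" for a k
  have Qe: "Q a v = R a (2*v)" for a v by (simp add: R_def)
  have Rnz0: "1 \<le> a \<Longrightarrow> a \<le> n \<Longrightarrow> R a k \<noteq> 0" for a k using nz by (simp add: R_def)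
  have Rnz: "R 1 k \<noteq> 0" for k using nz m by (auto simp add: R_def)
  have ne: "n - Suc 0 \<noteq> n" "n \<noteq> 0" using m by auto
  have P0: "Pc n Q (2*n+1) (u+1) = - (Q 1 (u + 1 + (2*of_nat n + 2)/2) / Q 1 (u + 1 + (2*of_nat n)/2))"
    using m by (subst Pc_hi) (auto simp: algebra_simps)
  have P1: "Pc n Q (2*n+2) u = -1"
    using m by (subst Pc_top) auto
  have P2: "xx n Q (2*n+2) u = zbar n Q 1 u"
    using m by (subst xx_zbar) auto
  show ?thesis using m
    by ((simp only: P0 P1 P2)?, (simp add: zz_def zbar_def YY_def dd_def xx_n1' xx_n2' ne )?,
      (simp only: Qe)?, (simp add: argsimps)?, (simp add: field_simps Rnz Rnz0 power2_eq_square)?)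
qed




lemma companion_det:
  fixes c :: "nat \<Rightarrow> 'F::field"
  assumes m: "1 \<le> m"
  shows "det (mat m m (\<lambda>(i,j). if j = m - 1 then - c i else if i = j + 1 then 1 else 0)) = (-1)^m * c 0"
proof -
  let ?C = "mat m m (\<lambda>(i,j). if j = m - 1 then - c i else if i = j + 1 then 1 else (0::'F))"
  have C: "?C \<in> carrier_mat m m" by simp
  have "det ?C = (\<Sum>j<m. ?C $$ (0,j) * cofactor ?C 0 j)"
    by (rule laplace_expansion_row[OF C]) (use m in auto)
  also have "\<dots> = (\<Sum>j<m. if j = m - 1 then - c 0 * cofactor ?C 0 (m-1) else 0)"
    by (rule sum.cong) (use m in auto)
  also have "\<dots> = - c 0 * cofactor ?C 0 (m-1)" using m by simp
  also have "mat_delete ?C 0 (m-1) = 1\<^sub>m (m-1)"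
    by (rule eq_matI) (auto simp: mat_delete_def)
  hence "cofactor ?C 0 (m-1) = (-1)^(m-1)" by (simp add: cofactor_def)
  finally show ?thesis using m
    by (cases m) auto
qed

lemma cas_shift_det:
  fixes W :: "nat \<Rightarrow> complex \<Rightarrow> 'F::field" and c :: "nat \<Rightarrow> 'F"
  assumes m: "1 \<le> m"
    and rec: "\<And>r. r < m \<Longrightarrow> W r (u + of_nat m) = - (\<Sum>k<m. c k * W r (u + of_nat k))"
  shows "det (mat m m (\<lambda>(r,s). W r (u + 1 + of_nat s))) = (-1)^m * c 0 * det (mat m m (\<lambda>(r,s). W r (u + of_nat s)))"
proof -
  let ?C = "mat m m (\<lambda>(i,j). if j = m - 1 then - c i else if i = j + 1 then 1 else (0::'F))"
  let ?M0 = "mat m m (\<lambda>(r,s). W r (u + of_nat s))"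
  have "mat m m (\<lambda>(r,s). W r (u + 1 + of_nat s)) = ?M0 * ?C"
  proof (rule eq_matI)
    fix r s assume r: "r < dim_row (?M0 * ?C)" and s: "s < dim_col (?M0 * ?C)"
    hence r: "r < m" and s: "s < m" by auto
    have "(?M0 * ?C) $$ (r, s) = (\<Sum>k\<in>{0..<m}. W r (u + of_nat k) * (if s = m - 1 then - c k else if k = s + 1 then 1 else 0))"
      using r s by (simp add: scalar_prod_def)
    also have "\<dots> = W r (u + 1 + of_nat s)"
    proof (cases "s = m - 1")
      case True
      then have "(\<Sum>k\<in>{0..<m}. W r (u + of_nat k) * (if s = m - 1 then - c k else if k = s + 1 then 1 else 0))
         = - (\<Sum>k<m. c k * W r (u + of_nat k))"
        by (simp add: sum_negf[symmetric] lessThan_atLeast0 algebra_simps)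
      also have "\<dots> = W r (u + of_nat m)" using rec[OF r] by simp
      also have "u + of_nat m = u + 1 + of_nat s" using True m by (simp add: of_nat_diff)
      finally show ?thesis .
    next
      case False
      then have "(\<Sum>k\<in>{0..<m}. W r (u + of_nat k) * (if s = m - 1 then - c k else if k = s + 1 then 1 else 0))
         = (\<Sum>k\<in>{0..<m}. if k = s + 1 then W r (u + of_nat k) else 0)"
        by (intro sum.cong) auto
      also have "\<dots> = W r (u + of_nat (s+1))" using False s by (simp)
      finally show ?thesis by (simp add: algebra_simps)
    qed
    finally show "mat m m (\<lambda>(r,s). W r (u + 1 + of_nat s)) $$ (r, s) = (?M0 * ?C) $$ (r, s)"
      using r s by simp
  qed auto
  hence "det (mat m m (\<lambda>(r,s). W r (u + 1 + of_nat s))) = det ?M0 * det ?C"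
    by (simp add: det_mult[of _ m])
  also have "det ?C = (-1)^m * c 0" by (rule companion_det[OF m])
  finally show ?thesis by simp
qed




lemma foldr_expand:
  fixes a :: "nat \<Rightarrow> complex \<Rightarrow> 'F::field"
    and F :: "nat \<Rightarrow> (complex \<Rightarrow> 'F) \<Rightarrow> complex \<Rightarrow> 'F"
  assumes F: "\<And>i g u. F i g u = g (u+1) - a i u * g u"
  shows "\<exists>c. (\<forall>f u. foldr F xs f u = (\<Sum>k\<le>length xs. c k u * f (u + of_nat k)))
           \<and> (\<forall>u. c (length xs) u = 1)
           \<and> (\<forall>u. c 0 u = (-1)^length xs * prod_list (map (\<lambda>i. a i u) xs))"
proof (induction xs)
  case Nil
  show ?case by (rule exI[of _ "\<lambda>k u. 1"]) simp
next
  case (Cons i xs)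
  then obtain c where c1: "\<And>f u. foldr F xs f u = (\<Sum>k\<le>length xs. c k u * f (u + of_nat k))"
    and c2: "\<And>u. c (length xs) u = 1"
    and c3: "\<And>u. c 0 u = (-1)^length xs * prod_list (map (\<lambda>i. a i u) xs)" by blast
  let ?L = "length xs"
  define d where "d k u = (if k = 0 then 0 else c (k-1) (u+1)) - a i u * (if k \<le> ?L then c k u else 0)" for k u
  have "foldr F (i # xs) f u = (\<Sum>k\<le>Suc ?L. d k u * f (u + of_nat k))" for f u
  proof -
    have "foldr F (i # xs) f u = (\<Sum>k\<le>?L. c k (u+1) * f (u + 1 + of_nat k)) - a i u * (\<Sum>k\<le>?L. c k u * f (u + of_nat k))"
      by (simp add: F c1)
    also have "(\<Sum>k\<le>?L. c k (u+1) * f (u + 1 + of_nat k)) = (\<Sum>k\<le>Suc ?L. (if k = 0 then 0 else c (k-1) (u+1)) * f (u + of_nat k))"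
      by (subst sum.atMost_Suc_shift) (simp add: algebra_simps)
    also have "a i u * (\<Sum>k\<le>?L. c k u * f (u + of_nat k)) = (\<Sum>k\<le>Suc ?L. a i u * (if k \<le> ?L then c k u else 0) * f (u + of_nat k))"
      by (simp add: sum_distrib_left algebra_simps)
    finally show ?thesis by (simp add: d_def sum_subtractf algebra_simps)
  qed
  moreover have "d (Suc ?L) u = 1" for u by (simp add: d_def c2)
  moreover have "d 0 u = (-1)^length (i#xs) * prod_list (map (\<lambda>i. a i u) (i#xs))" for u
    by (simp add: d_def c3)
  ultimately show ?case by (intro exI[of _ d]) simp
qed




context
  fixes n :: nat and Q :: "nat \<Rightarrow> complex \<Rightarrow> 'F::field"
  assumes nz: "\<And>a v. 1 \<le> a \<Longrightarrow> a \<le> n \<Longrightarrow> Q a v \<noteq> 0"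
    and n2: "2 \<le> n"
begin

lemma Pc_step:
  assumes m: "m < 2*n+2"
  shows "Pc n Q (m+1) u = Af n Q (2*n+2-m) u * Pc n Q m u"
proof -
  consider "m = 0" | "1 \<le> m" "m + 1 < n" | "m + 1 = n" | "m = n" | "m = n+1" | "m = n+2"
    | "n + 3 \<le> m" "m \<le> 2*n" | "m = 2*n+1" using m by linarith
  then show ?thesis
  proof cases
    case 1
    have e0: "Pc n Q (m+1) u = Pc n Q (1) u"
      by (rule arg_cong[where f="\<lambda>k. Pc n Q (k) u"]) (use 1 n2 in arith)
    have e1: "Af n Q (2*n+2-m) u = Af n Q (2*n+2) u"
      by (rule arg_cong[where f="\<lambda>k. Af n Q (k) u"]) (use 1 n2 in arith)
    have e2: "Pc n Q (m) u = Pc n Q (0) u"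
      by (rule arg_cong[where f="\<lambda>k. Pc n Q (k) u"]) (use 1 n2 in arith)
    show ?thesis using S1[where n=n and Q=Q and u=u, OF nz n2] by (simp only: e0 e1 e2)
  next
    case 2
    have c2a: "1 \<le> m" and c2b: "m + 1 < n" using 2 by auto
    show ?thesis by (rule S2[where n=n and Q=Q and m=m and u=u, OF nz c2a c2b])
  next
    case 3
    have e0: "Pc n Q (m+1) u = Pc n Q (n) u"
      by (rule arg_cong[where f="\<lambda>k. Pc n Q (k) u"]) (use 3 n2 in arith)
    have e1: "Af n Q (2*n+2-m) u = Af n Q (n+3) u"
      by (rule arg_cong[where f="\<lambda>k. Af n Q (k) u"]) (use 3 n2 in arith)
    have e2: "Pc n Q (m) u = Pc n Q (n-1) u"
      by (rule arg_cong[where f="\<lambda>k. Pc n Q (k) u"]) (use 3 n2 in arith)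
    show ?thesis using S3[where n=n and Q=Q and u=u, OF nz n2] by (simp only: e0 e1 e2)
  next
    case 4
    have e0: "Pc n Q (m+1) u = Pc n Q (n+1) u"
      by (rule arg_cong[where f="\<lambda>k. Pc n Q (k) u"]) (use 4 n2 in arith)
    have e1: "Af n Q (2*n+2-m) u = Af n Q (n+2) u"
      by (rule arg_cong[where f="\<lambda>k. Af n Q (k) u"]) (use 4 n2 in arith)
    have e2: "Pc n Q (m) u = Pc n Q (n) u"
      by (rule arg_cong[where f="\<lambda>k. Pc n Q (k) u"]) (use 4 n2 in arith)
    show ?thesis using S4[where n=n and Q=Q and u=u, OF nz n2] by (simp only: e0 e1 e2)
  next
    case 5
    have e0: "Pc n Q (m+1) u = Pc n Q (n+2) u"
      by (rule arg_cong[where f="\<lambda>k. Pc n Q (k) u"]) (use 5 n2 in arith)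
    have e1: "Af n Q (2*n+2-m) u = Af n Q (n+1) u"
      by (rule arg_cong[where f="\<lambda>k. Af n Q (k) u"]) (use 5 n2 in arith)
    have e2: "Pc n Q (m) u = Pc n Q (n+1) u"
      by (rule arg_cong[where f="\<lambda>k. Pc n Q (k) u"]) (use 5 n2 in arith)
    show ?thesis using S5[where n=n and Q=Q and u=u, OF nz n2] by (simp only: e0 e1 e2)
  next
    case 6
    have e0: "Pc n Q (m+1) u = Pc n Q (n+3) u"
      by (rule arg_cong[where f="\<lambda>k. Pc n Q (k) u"]) (use 6 n2 in arith)
    have e1: "Af n Q (2*n+2-m) u = Af n Q (n) u"
      by (rule arg_cong[where f="\<lambda>k. Af n Q (k) u"]) (use 6 n2 in arith)
    have e2: "Pc n Q (m) u = Pc n Q (n+2) u"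
      by (rule arg_cong[where f="\<lambda>k. Pc n Q (k) u"]) (use 6 n2 in arith)
    show ?thesis using S6[where n=n and Q=Q and u=u, OF nz n2] by (simp only: e0 e1 e2)
  next
    case 7
    have c7a: "1 \<le> 2*n+1-m" and c7b: "2*n+1-m+2 \<le> n" using 7 by auto
    have e0: "Pc n Q (m+1) u = Pc n Q (2*n+2-(2*n+1-m)) u"
      by (rule arg_cong[where f="\<lambda>k. Pc n Q (k) u"]) (use 7 n2 in arith)
    have e1: "Af n Q (2*n+2-m) u = Af n Q ((2*n+1-m)+1) u"
      by (rule arg_cong[where f="\<lambda>k. Af n Q (k) u"]) (use 7 n2 in arith)
    have e2: "Pc n Q (m) u = Pc n Q (2*n+1-(2*n+1-m)) u"
      by (rule arg_cong[where f="\<lambda>k. Pc n Q (k) u"]) (use 7 n2 in arith)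
    show ?thesis using S7a[where n=n and Q=Q and a="2*n+1-m" and u=u, OF nz c7a c7b] by (simp only: e0 e1 e2)
  next
    case 8
    have e0: "Pc n Q (m+1) u = Pc n Q (2*n+2) u"
      by (rule arg_cong[where f="\<lambda>k. Pc n Q (k) u"]) (use 8 n2 in arith)
    have e1: "Af n Q (2*n+2-m) u = Af n Q (1) u"
      by (rule arg_cong[where f="\<lambda>k. Af n Q (k) u"]) (use 8 n2 in arith)
    have e2: "Pc n Q (m) u = Pc n Q (2*n+1) u"
      by (rule arg_cong[where f="\<lambda>k. Pc n Q (k) u"]) (use 8 n2 in arith)
    show ?thesis using S7b[where n=n and Q=Q and u=u, OF nz n2] by (simp only: e0 e1 e2)
  qed
qed

lemma Pc_final:
  assumes m: "1 \<le> m" "m \<le> 2*n+2"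
  shows "Pc n Q (m-1) (u+1) = xx n Q m u * Pc n Q m u"
proof -
  consider "m = 1" | "2 \<le> m" "m + 1 \<le> n" | "m = n" | "m = n+1" | "m = n+2" | "m = n+3"
    | "n + 4 \<le> m" "m \<le> 2*n+1" | "m = 2*n+2" using m n2 by linarith
  then show ?thesis
  proof cases
    case 1
    have e0: "Pc n Q (m-1) (u+1) = Pc n Q (0) (u+1)"
      by (rule arg_cong[where f="\<lambda>k. Pc n Q (k) (u+1)"]) (use 1 n2 in arith)
    have e1: "xx n Q (m) u = xx n Q (1) u"
      by (rule arg_cong[where f="\<lambda>k. xx n Q (k) u"]) (use 1 n2 in arith)
    have e2: "Pc n Q (m) u = Pc n Q (1) u"
      by (rule arg_cong[where f="\<lambda>k. Pc n Q (k) u"]) (use 1 n2 in arith)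
    show ?thesis using F1[where n=n and Q=Q and u=u, OF nz n2] by (simp only: e0 e1 e2)
  next
    case 2
    have c2a: "1 \<le> m-1" and c2b: "m-1+2 \<le> n" using 2 by auto
    have e1: "xx n Q (m) u = xx n Q (m-1+1) u"
      by (rule arg_cong[where f="\<lambda>k. xx n Q (k) u"]) (use 2 n2 in arith)
    have e2: "Pc n Q (m) u = Pc n Q (m-1+1) u"
      by (rule arg_cong[where f="\<lambda>k. Pc n Q (k) u"]) (use 2 n2 in arith)
    show ?thesis using F2[where n=n and Q=Q and b="m-1" and u=u, OF nz c2a c2b] by (simp only: e1 e2)
  next
    case 3
    have e0: "Pc n Q (m-1) (u+1) = Pc n Q (n-1) (u+1)"
      by (rule arg_cong[where f="\<lambda>k. Pc n Q (k) (u+1)"]) (use 3 n2 in arith)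
    have e1: "xx n Q (m) u = xx n Q (n) u"
      by (rule arg_cong[where f="\<lambda>k. xx n Q (k) u"]) (use 3 n2 in arith)
    have e2: "Pc n Q (m) u = Pc n Q (n) u"
      by (rule arg_cong[where f="\<lambda>k. Pc n Q (k) u"]) (use 3 n2 in arith)
    show ?thesis using F3[where n=n and Q=Q and u=u, OF nz n2] by (simp only: e0 e1 e2)
  next
    case 4
    have e0: "Pc n Q (m-1) (u+1) = Pc n Q (n) (u+1)"
      by (rule arg_cong[where f="\<lambda>k. Pc n Q (k) (u+1)"]) (use 4 n2 in arith)
    have e1: "xx n Q (m) u = xx n Q (n+1) u"
      by (rule arg_cong[where f="\<lambda>k. xx n Q (k) u"]) (use 4 n2 in arith)
    have e2: "Pc n Q (m) u = Pc n Q (n+1) u"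
      by (rule arg_cong[where f="\<lambda>k. Pc n Q (k) u"]) (use 4 n2 in arith)
    show ?thesis using F4[where n=n and Q=Q and u=u, OF nz n2] by (simp only: e0 e1 e2)
  next
    case 5
    have e0: "Pc n Q (m-1) (u+1) = Pc n Q (n+1) (u+1)"
      by (rule arg_cong[where f="\<lambda>k. Pc n Q (k) (u+1)"]) (use 5 n2 in arith)
    have e1: "xx n Q (m) u = xx n Q (n+2) u"
      by (rule arg_cong[where f="\<lambda>k. xx n Q (k) u"]) (use 5 n2 in arith)
    have e2: "Pc n Q (m) u = Pc n Q (n+2) u"
      by (rule arg_cong[where f="\<lambda>k. Pc n Q (k) u"]) (use 5 n2 in arith)
    show ?thesis using F5[where n=n and Q=Q and u=u, OF nz n2] by (simp only: e0 e1 e2)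
  next
    case 6
    have e0: "Pc n Q (m-1) (u+1) = Pc n Q (n+2) (u+1)"
      by (rule arg_cong[where f="\<lambda>k. Pc n Q (k) (u+1)"]) (use 6 n2 in arith)
    have e1: "xx n Q (m) u = xx n Q (n+3) u"
      by (rule arg_cong[where f="\<lambda>k. xx n Q (k) u"]) (use 6 n2 in arith)
    have e2: "Pc n Q (m) u = Pc n Q (n+3) u"
      by (rule arg_cong[where f="\<lambda>k. Pc n Q (k) u"]) (use 6 n2 in arith)
    show ?thesis using F6[where n=n and Q=Q and u=u, OF nz n2] by (simp only: e0 e1 e2)
  next
    case 7
    have c7a: "1 \<le> 2*n+2-m" and c7b: "2*n+2-m+2 \<le> n" using 7 by auto
    have e0: "Pc n Q (m-1) (u+1) = Pc n Q (2*n+1-(2*n+2-m)) (u+1)"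
      by (rule arg_cong[where f="\<lambda>k. Pc n Q (k) (u+1)"]) (use 7 n2 in arith)
    have e1: "xx n Q (m) u = xx n Q (2*n+2-(2*n+2-m)) u"
      by (rule arg_cong[where f="\<lambda>k. xx n Q (k) u"]) (use 7 n2 in arith)
    have e2: "Pc n Q (m) u = Pc n Q (2*n+2-(2*n+2-m)) u"
      by (rule arg_cong[where f="\<lambda>k. Pc n Q (k) u"]) (use 7 n2 in arith)
    show ?thesis using F7[where n=n and Q=Q and b="2*n+2-m" and u=u, OF nz c7a c7b] by (simp only: e0 e1 e2)
  next
    case 8
    have e0: "Pc n Q (m-1) (u+1) = Pc n Q (2*n+1) (u+1)"
      by (rule arg_cong[where f="\<lambda>k. Pc n Q (k) (u+1)"]) (use 8 n2 in arith)
    have e1: "xx n Q (m) u = xx n Q (2*n+2) u"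
      by (rule arg_cong[where f="\<lambda>k. xx n Q (k) u"]) (use 8 n2 in arith)
    have e2: "Pc n Q (m) u = Pc n Q (2*n+2) u"
      by (rule arg_cong[where f="\<lambda>k. Pc n Q (k) u"]) (use 8 n2 in arith)
    show ?thesis using F8[where n=n and Q=Q and u=u, OF nz n2] by (simp only: e0 e1 e2)
  qed
qed

lemma Pprod:
  "m \<le> 2*n+2 \<Longrightarrow> prod_list (map (\<lambda>i. Af n Q i u) [2*n+3-m..<2*n+3]) = Pc n Q m u"
proof (induction m)
  case 0 then show ?case by (simp add: Pc_0)
next
  case (Suc m)
  have "[2*n+3-Suc m..<2*n+3] = (2*n+2-m) # [2*n+3-m..<2*n+3]"
  proof -
    have "[2*n+3-Suc m..<2*n+3] = (2*n+3-Suc m) # [Suc (2*n+3-Suc m)..<2*n+3]"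
      using Suc.prems by (intro upt_conv_Cons) auto
    moreover have "Suc (2*n+3-Suc m) = 2*n+3-m" "2*n+3-Suc m = 2*n+2-m" using Suc.prems by auto
    ultimately show ?thesis by simp
  qed
  then show ?case using Suc Pc_step[of m u] by simp
qed

end




lemma Q_nz:
  fixes Q :: "nat \<Rightarrow> complex \<Rightarrow> 'F::field"
  assumes "alg_indep_int {(a, u). 1 \<le> a \<and> a \<le> n} (\<lambda>(a, u). Q a u)"
    and "1 \<le> a" "a \<le> n"
  shows "Q a v \<noteq> 0"
proof -
  let ?p = "Poly_Mapping.single (Poly_Mapping.single (a, v) (1::nat)) (1::int)"
  have "?p \<noteq> 0" by simp
  moreover have "int_poly_vars ?p \<subseteq> {(a, u). 1 \<le> a \<and> a \<le> n}"
    using assms(2,3) by (simp add: int_poly_vars_def)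
  ultimately have "int_poly_eval (\<lambda>(a, u). Q a u) ?p \<noteq> 0"
    using assms(1) unfolding alg_indep_int_def by blast
  then show ?thesis by (simp add: int_poly_eval_def)
qed

theorem mainTheorem17:
  fixes n :: nat and Q :: "nat \<Rightarrow> complex \<Rightarrow> 'F::field"
    and w :: "nat \<Rightarrow> complex \<Rightarrow> 'F"
  assumes "n \<ge> 2"
    and "alg_indep_int {(a, u). 1 \<le> a \<and> a \<le> n} (\<lambda>(a, u). Q a u)"
    and "\<forall>j\<in>{1..2*n+2}. \<forall>m\<in>{1..j}. \<forall>u. Lop n Q j (w m) u = 0"
    and "\<forall>j\<in>{1..2*n+2}. \<forall>u. casorati w (map int [0..<j]) u \<noteq> 0"
  shows "\<forall>m\<in>{1..2*n+2}. \<forall>u. xtilde w m u = xx n Q m u"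
proof -
  have nz: "\<And>a v. 1 \<le> a \<Longrightarrow> a \<le> n \<Longrightarrow> Q a v \<noteq> 0" using Q_nz[OF assms(2)] by blast
  have n2: "2 \<le> n" using assms(1) by simp
  define Cm where "Cm j v = det (mat j j (\<lambda>(r,s). w (Suc r) (v + of_nat s)))" for j v
  have casI: "casorati w (map int [k..<l]) v = Cm (l-k) (v + of_nat k)" for k l v
    unfolding casorati_def Cm_def by (intro arg_cong[where f=det] eq_matI) (auto simp: algebra_simps)
  have Cnz: "Cm j v \<noteq> 0" if "1 \<le> j" "j \<le> 2*n+2" for j v
    using assms(4) that casI[of 0 j v] by auto
  have Cm0: "Cm 0 v = 1" for v by (simp add: Cm_def)
  have shift: "Cm j (v+1) = Pc n Q j v * Cm j v" if j: "j \<le> 2*n+2" for j v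
  proof (cases "j = 0")
    case True then show ?thesis by (simp add: Cm0 Pc_0)
  next
    case False
    obtain c where c1: "\<And>f u. foldr (Lfactor n Q) [2*n+3-j..<2*n+3] f u = (\<Sum>k\<le>length [2*n+3-j..<2*n+3]. c k u * f (u + of_nat k))"
      and c2: "\<And>u. c (length [2*n+3-j..<2*n+3]) u = 1"
      and c3: "\<And>u. c 0 u = (-1)^length [2*n+3-j..<2*n+3] * prod_list (map (\<lambda>i. Af n Q i u) [2*n+3-j..<2*n+3])"
      using foldr_expand[of "Lfactor n Q" "Af n Q" "[2*n+3-j..<2*n+3]"]
      by (auto simp: Lfactor_def Af_def)
    have len: "length [2*n+3-j..<2*n+3] = j" using j by simp
    have rec: "w (Suc r) (v + of_nat j) = - (\<Sum>k<j. c k v * w (Suc r) (v + of_nat k))" if r: "r < j" for r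
    proof -
      have "Lop n Q j (w (Suc r)) v = 0" using assms(3) j r False by auto
      hence "(\<Sum>k\<le>j. c k v * w (Suc r) (v + of_nat k)) = 0"
        unfolding Lop_def c1 len .
      hence "(\<Sum>k<j. c k v * w (Suc r) (v + of_nat k)) + w (Suc r) (v + of_nat j) = 0"
        using c2[of v] unfolding len by (simp add: lessThan_Suc_atMost[symmetric])
      thus ?thesis by (simp add: eq_neg_iff_add_eq_0 add.commute)
    qed
    have "Cm j (v+1) = (-1)^j * c 0 v * Cm j v"
      unfolding Cm_def by (rule cas_shift_det[where W="\<lambda>r. w (Suc r)" and c="\<lambda>k. c k v"]) (use False rec in auto)
    also have "c 0 v = (-1)^j * Pc n Q j v" using c3[of v] len Pprod[OF nz n2 j] by simp
    finally show ?thesis by (simp add: power_add[symmetric] mult.assoc[symmetric] mult_2[symmetric] power_mult)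
  qed
  show ?thesis
  proof (intro ballI allI)
    fix m u assume m: "m \<in> {1..2*n+2}"
    hence m1: "1 \<le> m" and m2: "m \<le> 2*n+2" by auto
    have xt: "xtilde w m u = Cm m u * Cm (m-1) (u+2) / (Cm m (u+1) * Cm (m-1) (u+1))"
      unfolding xtilde_def casI by (simp add: numeral_2_eq_2)
    have s1: "Cm (m-1) (u+2) = Pc n Q (m-1) (u+1) * Cm (m-1) (u+1)"
      using shift[of "m-1" "u+1"] m2 by (simp add: add.assoc)
    have s2: "Cm m (u+1) = Pc n Q m u * Cm m u" using shift[of m u] m2 by simp
    have nz1: "Cm m u \<noteq> 0" "Cm m (u+1) \<noteq> 0" using Cnz m1 m2 by auto
    have nz2: "Cm (m-1) (u+1) \<noteq> 0" using Cnz[of "m-1" "u+1"] Cm0 m1 m2 by (cases "m = 1") auto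
    have nz3: "Pc n Q m u \<noteq> 0" using nz1 s2 by auto
    have f: "Pc n Q (m-1) (u+1) = xx n Q m u * Pc n Q m u" by (rule Pc_final[OF nz n2 m1 m2])
    show "xtilde w m u = xx n Q m u"
      unfolding xt s1 s2 f using nz1 nz2 nz3 by (simp add: field_simps)
  qed
qed


end
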